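(* Let $\mathscr G=(V,\mathfrak E)$ be a subgraph of $(\mathbb Z^d,\mathfrak E_d)$, $d\ge2$, with positive weights $(w_e)_{e\in\mathfrak E}$, and let $\mathscr C=(V_{\mathscr C},\mathfrak E_{\mathscr C})$ be a subgraph of $\mathscr G$. Let $\nu,L\in(0,\infty)$ and $B\subseteq V$ satisfy: (i) there is $\mu>0$ such that $\mathcal E^{\boldsymbol w}_{\mathscr C}(f)\ge\mu\sum_{x\in V_{\mathscr C}}f(x)^2$ for all $f:V\to\mathbb R$ with $\mathrm{supp}\,f\subseteq B$; (ii) there is an injective map $\varphi:B\setminus V_{\mathscr C}\to V_{\mathscr C}$ such that for every $x\in B\setminus V_{\mathscr C}$ there is a self-avoiding directed path $l(x,\varphi(x))$ in $\mathscr G$ from $x$ to $\varphi(x)$ all of whose edges $e$ satisfy $w_e>\nu$ and whose length satisfies $|l(x,\varphi(x))|\le L$. Then for all $f:V\to\mathbb R$ with $\mathrm{supp}\,f\subseteq B$, $$\mathcal E^{\boldsymbol w}_{\mathscr G}(f)\ge\big((2L)^{d+1}\nu^{-1}+3\mu^{-1}\big)^{-1}\sum_{x\in V}f(x)^2.$$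
   Context: For an undirected graph $\mathscr G=(V,\mathfrak E)$ with weights $\boldsymbol w=(w_e)_{e\in\mathfrak E}$ and $f:V\to\mathbb R$, the Dirichlet energy on $\mathscr G$ is $\mathcal E^{\boldsymbol w}_{\mathscr G}(f)=\frac12\sum_{x\in V}\sum_{y\in V,\{x,y\}\in\mathfrak E}w_{xy}(f(x)-f(y))^2$. $(\mathbb Z^d,\mathfrak E_d)$ is the nearest-neighbour lattice. *)

theory Defs
  imports "HOL-Analysis.Analysis"
begin

text \<open>Vertices of Z^d are vectors int ^ 'd, with d = CARD('d).
  Undirected edges are two-element sets of vertices.\<close>

definition nn_adj :: "int ^ 'd \<Rightarrow> int ^ 'd \<Rightarrow> bool" where
  "nn_adj x y \<longleftrightarrow> (\<Sum>i\<in>UNIV. \<bar>x $ i - y $ i\<bar>) = 1"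

definition lattice_subgraph :: "(int ^ 'd) set \<Rightarrow> (int ^ 'd) set set \<Rightarrow> bool" where
  "lattice_subgraph V E \<longleftrightarrow>
     (\<forall>e\<in>E. \<exists>x y. e = {x, y} \<and> x \<in> V \<and> y \<in> V \<and> nn_adj x y)"

definition subgraph_of :: "'a set \<Rightarrow> 'a set set \<Rightarrow> 'a set \<Rightarrow> 'a set set \<Rightarrow> bool" where
  "subgraph_of VC EC V E \<longleftrightarrow> VC \<subseteq> V \<and> EC \<subseteq> E \<and>
     (\<forall>e\<in>EC. \<exists>x y. e = {x, y} \<and> x \<in> VC \<and> y \<in> VC)"

text \<open>Dirichlet energy, valued in [0,\<infinity>] (the graph may be infinite).\<close>
definition dirichlet_energy ::
  "'a set \<Rightarrow> 'a set set \<Rightarrow> ('a set \<Rightarrow> real) \<Rightarrow> ('a \<Rightarrow> real) \<Rightarrow> ennreal" where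
  "dirichlet_energy V E w f =
     (\<Sum>\<^sub>\<infinity>x\<in>V. \<Sum>\<^sub>\<infinity>y\<in>{y\<in>V. {x, y} \<in> E}.
        ennreal (w {x, y} * (f x - f y)\<^sup>2)) / 2"

definition sq_norm_on :: "'a set \<Rightarrow> ('a \<Rightarrow> real) \<Rightarrow> ennreal" where
  "sq_norm_on A f = (\<Sum>\<^sub>\<infinity>x\<in>A. ennreal ((f x)\<^sup>2))"

text \<open>A self-avoiding directed path in (V,E) from x to y, given as its vertex list;
  its length is the number of edges, length p - 1.\<close>
definition sa_path :: "'a set \<Rightarrow> 'a set set \<Rightarrow> 'a \<Rightarrow> 'a \<Rightarrow> 'a list \<Rightarrow> bool" where
  "sa_path V E x y p \<longleftrightarrow> p \<noteq> [] \<and> hd p = x \<and> last p = y \<and> distinct p \<and>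
     set p \<subseteq> V \<and> (\<forall>i. Suc i < length p \<longrightarrow> {p ! i, p ! Suc i} \<in> E)"

definition path_edges :: "'a list \<Rightarrow> 'a set set" where
  "path_edges p = {{p ! i, p ! Suc i} | i. Suc i < length p}"

end

theory Submission
  imports Defs
begin

lemma ens[simp]: "(g :: 'a \<Rightarrow> ennreal) summable_on A"
  by (simp add: nonneg_summable_on_complete)

lemma fin_le_infsum:
  fixes g :: "'a \<Rightarrow> ennreal"
  assumes "finite F" "F \<subseteq> A"
  shows "sum g F \<le> infsum g A"
proof -
  have "infsum g F \<le> infsum g A"
    by (rule infsum_mono_neutral) (use assms in \<open>auto simp: ens\<close>)
  then show ?thesis using assms by simp
qed

lemma infsum_le_from_finite:
  fixes g :: "'a \<Rightarrow> ennreal"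
  assumes "\<And>F. finite F \<Longrightarrow> F \<subseteq> A \<Longrightarrow> sum g F \<le> c"
  shows "infsum g A \<le> c"
  using assms by (subst nonneg_infsum_complete) (auto intro!: SUP_least)

lemma fin_le_nested:
  fixes g :: "'a \<Rightarrow> 'b \<Rightarrow> ennreal"
  assumes U: "finite U" "U \<subseteq> Sigma A N"
  shows "(\<Sum>(a,b)\<in>U. g a b) \<le> (\<Sum>\<^sub>\<infinity>a\<in>A. \<Sum>\<^sub>\<infinity>b\<in>N a. g a b)"
proof -
  have eq: "U = Sigma (fst ` U) (\<lambda>a. {b. (a,b) \<in> U})" by force
  have fin: "finite {b. (a,b) \<in> U}" for a
    using finite_imageI[OF U(1), of snd] by (rule finite_subset[rotated]) force
  have "(\<Sum>(a,b)\<in>U. g a b) = (\<Sum>a\<in>fst ` U. \<Sum>b\<in>{b. (a,b) \<in> U}. g a b)"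
    by (subst eq, subst sum.Sigma) (use U fin in auto)
  also have "\<dots> \<le> (\<Sum>a\<in>fst ` U. \<Sum>\<^sub>\<infinity>b\<in>N a. g a b)"
    by (rule sum_mono, rule fin_le_infsum) (use U fin in auto)
  also have "\<dots> \<le> (\<Sum>\<^sub>\<infinity>a\<in>A. \<Sum>\<^sub>\<infinity>b\<in>N a. g a b)"
    by (rule fin_le_infsum) (use U in auto)
  finally show ?thesis .
qed

lemma nn_adj_coord: "nn_adj u v \<Longrightarrow> \<bar>u $ k - v $ k\<bar> \<le> 1"
  unfolding nn_adj_def
proof -
  assume "(\<Sum>i\<in>UNIV. \<bar>u $ i - v $ i\<bar>) = 1"
  moreover have "\<bar>u $ k - v $ k\<bar> \<le> (\<Sum>i\<in>UNIV. \<bar>u $ i - v $ i\<bar>)"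
    by (rule member_le_sum) auto
  ultimately show ?thesis by simp
qed

lemma cs_sum:
  fixes d :: "nat \<Rightarrow> real"
  shows "(\<Sum>i<n. d i)\<^sup>2 \<le> real n * (\<Sum>i<n. (d i)\<^sup>2)"
  using Cauchy_Schwarz_ineq_sum[of "\<lambda>_. 1" d "{..<n}"] by simp

lemma card_box:
  fixes c :: "int ^ 'd" and R :: int
  shows "finite {y :: int ^ 'd. \<forall>k. c $ k - R \<le> y $ k \<and> y $ k \<le> c $ k + R + 1}"
    "card {y :: int ^ 'd. \<forall>k. c $ k - R \<le> y $ k \<and> y $ k \<le> c $ k + R + 1} = nat (2*R+2) ^ CARD('d)"
proof -
  define T where "T k = {c $ k - R .. c $ k + R + 1}" for k
  have eq: "{y :: int ^ 'd. \<forall>k. c $ k - R \<le> y $ k \<and> y $ k \<le> c $ k + R + 1} = vec_lambda ` (PiE UNIV T)"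
  proof (intro equalityI subsetI)
    fix y :: "int ^ 'd" assume "y \<in> {y. \<forall>k. c $ k - R \<le> y $ k \<and> y $ k \<le> c $ k + R + 1}"
    then have "vec_nth y \<in> PiE UNIV T" by (auto simp: T_def)
    then show "y \<in> vec_lambda ` (PiE UNIV T)" by (metis image_eqI vec_nth_inverse)
  qed (auto simp: T_def)
  have inj: "inj_on vec_lambda (PiE UNIV T)"
    by (rule inj_onI) (metis vec_lambda_inverse UNIV_I)
  have "card (PiE UNIV T) = nat (2*R+2) ^ CARD('d)"
    by (simp add: card_PiE T_def add.commute)
  moreover have "finite (PiE UNIV T)" by (simp add: finite_PiE T_def)
  ultimately show "finite {y :: int ^ 'd. \<forall>k. c $ k - R \<le> y $ k \<and> y $ k \<le> c $ k + R + 1}"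
    "card {y :: int ^ 'd. \<forall>k. c $ k - R \<le> y $ k \<and> y $ k \<le> c $ k + R + 1} = nat (2*R+2) ^ CARD('d)"
    by (simp_all add: eq card_image[OF inj])
qed

lemma edge_coord:
  assumes "lattice_subgraph V E" "{a,b} \<in> E"
  shows "\<bar>a $ k - b $ k\<bar> \<le> 1"
proof -
  obtain u v where "{a,b} = {u,v}" "nn_adj u v"
    using assms unfolding lattice_subgraph_def by blast
  then have "(a = u \<and> b = v) \<or> (a = v \<and> b = u)" by (auto simp: doubleton_eq_iff)
  then show ?thesis using nn_adj_coord[OF \<open>nn_adj u v\<close>, of k] by auto
qed

lemma path_ineq:
  fixes p :: "'a list" and f :: "'a \<Rightarrow> real"
  assumes sp: "sa_path V E x y p" and wg: "\<forall>e\<in>path_edges p. w e > \<nu>"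
    and len: "real (length p - 1) \<le> L" and nu: "\<nu> > 0"
  shows "(f x)\<^sup>2 \<le> 2*(f y)\<^sup>2 + 2*L/\<nu> * (\<Sum>i<length p - 1. w {p!i, p!Suc i} * (f (p!i) - f (p!Suc i))\<^sup>2)"
proof -
  define n where "n = length p - 1"
  define d where "d i = f (p!i) - f (p!Suc i)" for i
  have pne: "p \<noteq> []" and hd: "hd p = x" and lst: "last p = y"
    using sp unfolding sa_path_def by auto
  have p0: "p!0 = x" using pne hd by (simp add: hd_conv_nth)
  have pn: "p!n = y" using pne lst by (simp add: last_conv_nth n_def)
  have tel: "(\<Sum>i<n. d i) = f x - f y"
    unfolding d_def using sum_lessThan_telescope'[of "\<lambda>i. f (p!i)" n] p0 pn by simp
  have Ln: "real n \<le> L" using len n_def by simp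
  have dle: "(d i)\<^sup>2 \<le> w {p!i, p!Suc i} * (d i)\<^sup>2 / \<nu>" if "i < n" for i
  proof -
    have "{p!i, p!Suc i} \<in> path_edges p" unfolding path_edges_def using that n_def by auto
    then have "w {p!i, p!Suc i} > \<nu>" using wg by auto
    then have "\<nu> * (d i)\<^sup>2 \<le> w {p!i, p!Suc i} * (d i)\<^sup>2"
      by (intro mult_right_mono) auto
    then show ?thesis using nu by (simp add: field_simps)
  qed
  have "(f x)\<^sup>2 = (f y + (\<Sum>i<n. d i))\<^sup>2" using tel by simp
  also have "\<dots> \<le> 2*(f y)\<^sup>2 + 2*(\<Sum>i<n. d i)\<^sup>2"
    by (smt (verit) sum_squares_ge_zero power2_sum zero_le_power2 power2_diff)
  also have "(\<Sum>i<n. d i)\<^sup>2 \<le> real n * (\<Sum>i<n. (d i)\<^sup>2)" by (rule cs_sum)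
  also have "\<dots> \<le> L * (\<Sum>i<n. (d i)\<^sup>2)"
    by (rule mult_right_mono[OF Ln]) (simp add: sum_nonneg)
  also have "(\<Sum>i<n. (d i)\<^sup>2) \<le> (\<Sum>i<n. w {p!i, p!Suc i} * (d i)\<^sup>2 / \<nu>)"
    by (rule sum_mono) (use dle in auto)
  also have "\<dots> = (\<Sum>i<n. w {p!i, p!Suc i} * (d i)\<^sup>2) / \<nu>"
    by (simp add: sum_divide_distrib)
  finally have "(f x)\<^sup>2 \<le> 2*(f y)\<^sup>2 + 2 * (L * ((\<Sum>i<n. w {p!i, p!Suc i} * (d i)\<^sup>2) / \<nu>))"
    using Ln nu \<open>p \<noteq> []\<close> by (simp add: mult_left_mono)
  then show ?thesis by (simp add: n_def d_def field_simps)
qed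

definition Qp :: "'a list \<Rightarrow> ('a \<times> 'a) set" where
  "Qp p = (\<lambda>i. (p!i, p!Suc i)) ` {..<length p - 1} \<union> (\<lambda>i. (p!Suc i, p!i)) ` {..<length p - 1}"

lemma Qp_finite: "finite (Qp p)" unfolding Qp_def by simp

lemma Q_sum:
  fixes h :: "'a \<Rightarrow> 'a \<Rightarrow> real"
  assumes dp: "distinct p" and hs: "\<And>a b. h a b = h b a"
  shows "(\<Sum>q\<in>Qp p. h (fst q) (snd q)) = 2 * (\<Sum>i<length p - 1. h (p!i) (p!Suc i))"
proof -
  define n where "n = length p - 1"
  have inj1: "inj_on (\<lambda>i. (p!i, p!Suc i)) {..<n}"
    by (rule inj_onI) (use dp in \<open>auto simp: n_def nth_eq_iff_index_eq\<close>)
  have inj2: "inj_on (\<lambda>i. (p!Suc i, p!i)) {..<n}"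
    by (rule inj_onI) (use dp in \<open>auto simp: n_def nth_eq_iff_index_eq\<close>)
  have disj: "(\<lambda>i. (p!i, p!Suc i)) ` {..<n} \<inter> (\<lambda>i. (p!Suc i, p!i)) ` {..<n} = {}"
  proof (rule ccontr)
    assume "\<not> ?thesis"
    then obtain i j where ij: "i < n" "j < n" "p!i = p!Suc j" "p!Suc i = p!j" by auto
    then have "i = Suc j" "Suc i = j" using dp by (auto simp: n_def nth_eq_iff_index_eq)
    then show False by simp
  qed
  have "(\<Sum>q\<in>Qp p. h (fst q) (snd q)) =
     (\<Sum>q\<in>(\<lambda>i. (p!i, p!Suc i)) ` {..<n}. h (fst q) (snd q)) + (\<Sum>q\<in>(\<lambda>i. (p!Suc i, p!i)) ` {..<n}. h (fst q) (snd q))"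
    unfolding Qp_def n_def[symmetric] by (rule sum.union_disjoint) (use disj in auto)
  also have "\<dots> = (\<Sum>i<n. h (p!i) (p!Suc i)) + (\<Sum>i<n. h (p!Suc i) (p!i))"
    by (simp add: sum.reindex[OF inj1] sum.reindex[OF inj2])
  also have "\<dots> = 2 * (\<Sum>i<n. h (p!i) (p!Suc i))" using hs by simp
  finally show ?thesis by (simp add: n_def)
qed

lemma Q_sub:
  assumes "sa_path V E x y p"
  shows "Qp p \<subseteq> Sigma V (\<lambda>a. {b\<in>V. {a,b} \<in> E})"
proof -
  have "p!i \<in> V" "p!Suc i \<in> V" "{p!i, p!Suc i} \<in> E" if "i < length p - 1" for i
    using assms that unfolding sa_path_def by (auto simp: subset_iff)
  then show ?thesis unfolding Qp_def by (auto simp: insert_commute)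
qed

lemma Q_coord:
  assumes G: "lattice_subgraph V E" and sp: "sa_path V E x y p"
  shows "i < length p \<Longrightarrow> \<bar>x $ k - (p!i) $ k\<bar> \<le> int i"
proof (induction i)
  case 0
  have "p!0 = x" using sp unfolding sa_path_def by (metis hd_conv_nth)
  then show ?case by simp
next
  case (Suc i)
  then have "{p!i, p!Suc i} \<in> E" using sp unfolding sa_path_def by auto
  then have "\<bar>(p!i) $ k - (p!Suc i) $ k\<bar> \<le> 1" by (rule edge_coord[OF G])
  with Suc show ?case by simp
qed

definition box :: "real \<Rightarrow> ((int ^ 'd) \<times> (int ^ 'd)) \<Rightarrow> (int ^ 'd) set" where
  "box L q = {y. \<forall>k. min (fst q $ k) (snd q $ k) - (\<lfloor>L\<rfloor> - 1) \<le> y $ k \<and>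
       y $ k \<le> min (fst q $ k) (snd q $ k) + (\<lfloor>L\<rfloor> - 1) + 1}"

lemma box_finite: "finite (box L q)"
  unfolding box_def using card_box(1)[of "\<chi> k. min (fst q $ k) (snd q $ k)" "\<lfloor>L\<rfloor> - 1"] by simp

lemma box_card:
  assumes "L \<ge> 0"
  shows "real (card (box L (q :: (int ^ 'd) \<times> (int ^ 'd)))) \<le> (2*L) ^ CARD('d)"
proof -
  have "card (box L q) = nat (2*(\<lfloor>L\<rfloor> - 1)+2) ^ CARD('d)"
    unfolding box_def using card_box(2)[of "\<chi> k. min (fst q $ k) (snd q $ k)" "\<lfloor>L\<rfloor> - 1"] by simp
  also have "nat (2*(\<lfloor>L\<rfloor> - 1)+2) = nat (2*\<lfloor>L\<rfloor>)" by simp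
  finally have "real (card (box L q)) = real_of_int (2*\<lfloor>L\<rfloor>) ^ CARD('d)"
    using assms by simp
  also have "\<dots> \<le> (2*L) ^ CARD('d)"
    by (rule power_mono) (use assms in auto)
  finally show ?thesis .
qed

lemma Q_box:
  assumes G: "lattice_subgraph V E" and sp: "sa_path V E x y p"
    and len: "real (length p - 1) \<le> L" and q: "q \<in> Qp p"
  shows "x \<in> box L q"
proof -
  obtain i where i: "i < length p - 1" and
    qi: "q = (p!i, p!Suc i) \<or> q = (p!Suc i, p!i)" using q unfolding Qp_def by auto
  have "real (Suc i) \<le> L" using i len by linarith
  then have "int (Suc i) \<le> \<lfloor>L\<rfloor>" by (simp add: le_floor_iff)
  then have iL: "int i \<le> \<lfloor>L\<rfloor> - 1" by simp
  have "x $ k \<ge> min (fst q $ k) (snd q $ k) - (\<lfloor>L\<rfloor> - 1) \<and>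
        x $ k \<le> min (fst q $ k) (snd q $ k) + (\<lfloor>L\<rfloor> - 1) + 1" for k
  proof -
    have a: "\<bar>x $ k - (p!i) $ k\<bar> \<le> int i" using Q_coord[OF G sp, of i k] i by simp
    have "{p!i, p!Suc i} \<in> E" using sp i unfolding sa_path_def by auto
    then have b: "\<bar>(p!i) $ k - (p!Suc i) $ k\<bar> \<le> 1" by (rule edge_coord[OF G])
    show ?thesis using qi a b iL by auto
  qed
  then show ?thesis unfolding box_def by auto
qed

theorem lemma4p1:
  fixes V VC :: "(int ^ 'd) set"
    and E EC :: "(int ^ 'd) set set"
    and w :: "(int ^ 'd) set \<Rightarrow> real"
    and B :: "(int ^ 'd) set"
    and \<nu> L \<mu> :: real
    and \<phi> :: "int ^ 'd \<Rightarrow> int ^ 'd"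
  assumes d2: "CARD('d) \<ge> 2"
    and G: "lattice_subgraph V E"
    and wpos: "\<forall>e\<in>E. w e > 0"
    and C: "subgraph_of VC EC V E"
    and \<nu>pos: "\<nu> > 0" and Lpos: "L > 0"
    and BV: "B \<subseteq> V"
    and \<mu>pos: "\<mu> > 0"
    and hyp_i: "\<And>g :: int ^ 'd \<Rightarrow> real. (\<forall>x. g x \<noteq> 0 \<longrightarrow> x \<in> B) \<Longrightarrow>
         dirichlet_energy VC EC w g \<ge> ennreal \<mu> * sq_norm_on VC g"
    and \<phi>_into: "\<phi> ` (B - VC) \<subseteq> VC"
    and \<phi>_inj: "inj_on \<phi> (B - VC)"
    and paths: "\<forall>x\<in>B - VC. \<exists>p. sa_path V E x (\<phi> x) p \<and>
         (\<forall>e\<in>path_edges p. w e > \<nu>) \<and> real (length p - 1) \<le> L"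
    and f_supp: "\<forall>x. f x \<noteq> 0 \<longrightarrow> x \<in> B"
  shows "dirichlet_energy V E w f \<ge>
     ennreal (inverse ((2 * L) ^ (CARD('d) + 1) / \<nu> + 3 / \<mu>)) * sq_norm_on V f"
proof -
  define A where "A = B - VC"
  define h where "h a b = w {a,b} * (f a - f b)\<^sup>2" for a b
  define N where "N a = {b \<in> V. {a,b} \<in> E}" for a
  define Et where "Et = (\<Sum>\<^sub>\<infinity>a\<in>V. \<Sum>\<^sub>\<infinity>b\<in>N a. ennreal (h a b))"
  define D where "D = dirichlet_energy V E w f"
  define SC where "SC = (\<Sum>\<^sub>\<infinity>x\<in>VC. ennreal ((f x)\<^sup>2))"
  define SA where "SA = (\<Sum>\<^sub>\<infinity>x\<in>A. ennreal ((f x)\<^sup>2))"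
  define SV where "SV = (\<Sum>\<^sub>\<infinity>x\<in>V. ennreal ((f x)\<^sup>2))"
  define K where "K = L / \<nu> * (2*L) ^ CARD('d)"
  have DE: "D = Et / 2" unfolding D_def dirichlet_energy_def Et_def N_def h_def by simp
  have hsym: "h a b = h b a" for a b by (simp add: h_def insert_commute power2_commute)
  have hnn: "h a b \<ge> 0" if "{a,b} \<in> E" for a b
    using wpos that unfolding h_def by (simp add: less_imp_le)
  obtain P where P: "\<forall>x\<in>A. sa_path V E x (\<phi> x) (P x) \<and>
         (\<forall>e\<in>path_edges (P x). w e > \<nu>) \<and> real (length (P x) - 1) \<le> L"
    using paths unfolding A_def by metis
  have VCV: "VC \<subseteq> V" using C unfolding subgraph_of_def by auto
  have K0: "K \<ge> 0" unfolding K_def using Lpos \<nu>pos by simp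

  have perx: "(f x)\<^sup>2 \<le> 2*(f (\<phi> x))\<^sup>2 + L/\<nu> * (\<Sum>q\<in>Qp (P x). h (fst q) (snd q))" if "x \<in> A" for x
  proof -
    have sp: "sa_path V E x (\<phi> x) (P x)" using P that by auto
    have "(f x)\<^sup>2 \<le> 2*(f (\<phi> x))\<^sup>2 + 2*L/\<nu> * (\<Sum>i<length (P x) - 1. h (P x!i) (P x!Suc i))"
      using path_ineq[OF sp, where w=w and \<nu>=\<nu> and L=L and f=f] P that \<nu>pos unfolding h_def by auto
    also have "2*L/\<nu> * (\<Sum>i<length (P x) - 1. h (P x!i) (P x!Suc i)) = L/\<nu> * (\<Sum>q\<in>Qp (P x). h (fst q) (snd q))"
      using Q_sum[of "P x" h] sp hsym unfolding sa_path_def by simp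
    finally show ?thesis .
  qed
  have Qsub: "Qp (P x) \<subseteq> Sigma V N" if "x \<in> A" for x
    using Q_sub[of V E x "\<phi> x" "P x"] P that unfolding N_def by auto
  have Qbox: "x \<in> box L q" if "x \<in> A" "q \<in> Qp (P x)" for x q
    using Q_box[OF G, of x "\<phi> x" "P x" L q] P that by auto

  have fin_step: "ennreal (\<Sum>x\<in>F. (f x)\<^sup>2) \<le> 2 * SC + ennreal K * Et" if F: "finite F" "F \<subseteq> A" for F
  proof -
    define U where "U = (\<Union>x\<in>F. Qp (P x))"
    have Ufin: "finite U" unfolding U_def using F by (simp add: Qp_finite)
    have USig: "U \<subseteq> Sigma V N" unfolding U_def using Qsub F by auto
    have hU: "h (fst q) (snd q) \<ge> 0" if "q \<in> U" for q
      using USig that hnn unfolding N_def by auto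
    have "(\<Sum>x\<in>F. \<Sum>q\<in>Qp (P x). h (fst q) (snd q)) = (\<Sum>x\<in>F. \<Sum>q\<in>U. if q \<in> Qp (P x) then h (fst q) (snd q) else 0)"
    proof (rule sum.cong[OF refl])
      fix x assume "x \<in> F"
      then have "Qp (P x) \<subseteq> U" unfolding U_def by auto
      then show "(\<Sum>q\<in>Qp (P x). h (fst q) (snd q)) = (\<Sum>q\<in>U. if q \<in> Qp (P x) then h (fst q) (snd q) else 0)"
        using Ufin by (simp add: sum.If_cases Int_absorb1 Int_absorb2)
    qed
    also have "\<dots> = (\<Sum>q\<in>U. \<Sum>x\<in>F. if q \<in> Qp (P x) then h (fst q) (snd q) else 0)"
      by (rule sum.swap)
    also have "\<dots> = (\<Sum>q\<in>U. h (fst q) (snd q) * real (card {x\<in>F. q \<in> Qp (P x)}))"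
      using F by (simp add: sum.If_cases mult.commute Int_def)
    also have "\<dots> \<le> (\<Sum>q\<in>U. h (fst q) (snd q) * (2*L) ^ CARD('d))"
    proof (rule sum_mono)
      fix q assume q: "q \<in> U"
      have "{x\<in>F. q \<in> Qp (P x)} \<subseteq> box L q" using Qbox F by blast
      then have "card {x\<in>F. q \<in> Qp (P x)} \<le> card (box L q)"
        by (rule card_mono[OF box_finite])
      also note box_card[of L q]
      finally have "real (card {x\<in>F. q \<in> Qp (P x)}) \<le> (2*L) ^ CARD('d)"
        using Lpos by linarith
      then show "h (fst q) (snd q) * real (card {x\<in>F. q \<in> Qp (P x)}) \<le> h (fst q) (snd q) * (2*L) ^ CARD('d)"
        using hU[OF q] by (simp add: mult_left_mono)
    qed
    finally have cnt: "(\<Sum>x\<in>F. \<Sum>q\<in>Qp (P x). h (fst q) (snd q)) \<le> (2*L) ^ CARD('d) * (\<Sum>q\<in>U. h (fst q) (snd q))"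
      by (simp only: sum_distrib_right mult.commute)
    have "(\<Sum>x\<in>F. (f x)\<^sup>2) \<le> (\<Sum>x\<in>F. 2*(f (\<phi> x))\<^sup>2 + L/\<nu> * (\<Sum>q\<in>Qp (P x). h (fst q) (snd q)))"
      by (rule sum_mono) (use perx F in auto)
    also have "\<dots> = 2 * (\<Sum>x\<in>F. (f (\<phi> x))\<^sup>2) + L/\<nu> * (\<Sum>x\<in>F. \<Sum>q\<in>Qp (P x). h (fst q) (snd q))"
      by (simp add: sum.distrib sum_distrib_left)
    also have "\<dots> \<le> 2 * (\<Sum>x\<in>F. (f (\<phi> x))\<^sup>2) + K * (\<Sum>q\<in>U. h (fst q) (snd q))"
      using mult_left_mono[OF cnt, of "L/\<nu>"] Lpos \<nu>pos unfolding K_def by (simp add: mult.assoc)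
    finally have real_ineq: "(\<Sum>x\<in>F. (f x)\<^sup>2) \<le> 2 * (\<Sum>y\<in>\<phi> ` F. (f y)\<^sup>2) + K * (\<Sum>q\<in>U. h (fst q) (snd q))"
      using sum.reindex[OF inj_on_subset[OF \<phi>_inj], of F "\<lambda>y. (f y)\<^sup>2"] F unfolding A_def by simp
    have Upos: "(\<Sum>q\<in>U. h (fst q) (snd q)) \<ge> 0" using hU by (simp add: sum_nonneg)
    have "ennreal (\<Sum>x\<in>F. (f x)\<^sup>2) \<le> ennreal (2 * (\<Sum>y\<in>\<phi> ` F. (f y)\<^sup>2) + K * (\<Sum>q\<in>U. h (fst q) (snd q)))"
      using real_ineq by (rule ennreal_leI)
    also have "\<dots> = 2 * ennreal (\<Sum>y\<in>\<phi> ` F. (f y)\<^sup>2) + ennreal K * ennreal (\<Sum>q\<in>U. h (fst q) (snd q))"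
      using K0 Upos by (simp add: ennreal_plus ennreal_mult sum_nonneg ennreal_mult')
    also have "ennreal (\<Sum>y\<in>\<phi> ` F. (f y)\<^sup>2) = (\<Sum>y\<in>\<phi> ` F. ennreal ((f y)\<^sup>2))"
      by (rule sum_ennreal[symmetric]) simp
    also have "\<dots> \<le> SC" unfolding SC_def
      by (rule fin_le_infsum) (use F \<phi>_into in \<open>auto simp: A_def\<close>)
    also have "ennreal (\<Sum>q\<in>U. h (fst q) (snd q)) = (\<Sum>q\<in>U. ennreal (h (fst q) (snd q)))"
      by (rule sum_ennreal[symmetric]) (use hU in auto)
    also have "\<dots> = (\<Sum>(a,b)\<in>U. ennreal (h a b))" by (simp add: case_prod_beta)
    also have "\<dots> \<le> Et" unfolding Et_def by (rule fin_le_nested[OF Ufin USig])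
    finally show ?thesis by (simp add: add_mono mult_left_mono)
  qed
  have SA_le: "SA \<le> 2 * SC + ennreal K * Et"
    unfolding SA_def
  proof (rule infsum_le_from_finite)
    fix F assume "finite F" "F \<subseteq> A"
    then show "(\<Sum>x\<in>F. ennreal ((f x)\<^sup>2)) \<le> 2 * SC + ennreal K * Et"
      using fin_step[of F] by (simp add: sum_ennreal)
  qed

  have SV_eq: "SV = SC + SA"
  proof -
    have "SV = (\<Sum>\<^sub>\<infinity>x\<in>VC \<union> A. ennreal ((f x)\<^sup>2))"
      unfolding SV_def
      by (rule infsum_cong_neutral) (use f_supp VCV BV in \<open>auto simp: A_def\<close>)
    also have "\<dots> = SC + SA" unfolding SC_def SA_def
      by (rule infsum_Un_disjoint) (auto simp: A_def)
    finally show ?thesis .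
  qed
  have EC_le: "dirichlet_energy VC EC w f \<le> D"
  proof -
    have "(\<Sum>\<^sub>\<infinity>x\<in>VC. \<Sum>\<^sub>\<infinity>y\<in>{y\<in>VC. {x, y} \<in> EC}. ennreal (w {x, y} * (f x - f y)\<^sup>2))
        \<le> (\<Sum>\<^sub>\<infinity>x\<in>V. \<Sum>\<^sub>\<infinity>y\<in>{y\<in>V. {x, y} \<in> E}. ennreal (w {x, y} * (f x - f y)\<^sup>2))"
    proof (rule infsum_mono_neutral)
      fix x assume "x \<in> VC \<inter> V"
      show "(\<Sum>\<^sub>\<infinity>y\<in>{y\<in>VC. {x, y} \<in> EC}. ennreal (w {x, y} * (f x - f y)\<^sup>2))
        \<le> (\<Sum>\<^sub>\<infinity>y\<in>{y\<in>V. {x, y} \<in> E}. ennreal (w {x, y} * (f x - f y)\<^sup>2))"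
        by (rule infsum_mono_neutral) (use C in \<open>auto simp: subgraph_of_def\<close>)
    qed (use VCV in auto)
    then show ?thesis unfolding D_def dirichlet_energy_def by (rule divide_right_mono_ennreal)
  qed
  have SC_le: "ennreal \<mu> * SC \<le> D"
    using hyp_i[of f] f_supp EC_le unfolding SC_def sq_norm_on_def by auto
  have SC_le2: "SC \<le> ennreal (1/\<mu>) * D"
  proof -
    have "SC = ennreal (1/\<mu>) * (ennreal \<mu> * SC)"
      using \<mu>pos by (simp add: mult.assoc[symmetric] ennreal_mult[symmetric])
    also have "\<dots> \<le> ennreal (1/\<mu>) * D" using SC_le by (rule mult_left_mono) simp
    finally show ?thesis .
  qed
  have Et2: "Et = 2 * D"
    unfolding DE by (simp add: ennreal_times_divide mult.commute ennreal_mult_divide_eq)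
  define c where "c = (2 * L) ^ (CARD('d) + 1) / \<nu> + 3 / \<mu>"
  have cpos: "c > 0" unfolding c_def using Lpos \<nu>pos \<mu>pos by (intro add_pos_pos) auto
  have c_eq: "c = 3 * (1/\<mu>) + K * 2" unfolding c_def K_def by (simp add: field_simps)
  have "SV \<le> 3 * SC + ennreal K * Et"
  proof -
    have "SV \<le> SC + (2 * SC + ennreal K * Et)" unfolding SV_eq using SA_le by (rule add_left_mono)
    also have "\<dots> = (1 + 2) * SC + ennreal K * Et" by (simp only: distrib_right add.assoc mult_1)
    also have "(1 + 2 :: ennreal) = 3" by simp
    finally show ?thesis .
  qed
  also have "\<dots> \<le> 3 * (ennreal (1/\<mu>) * D) + ennreal K * (2 * D)"
    unfolding Et2 using SC_le2 by (intro add_mono mult_left_mono) auto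
  also have "\<dots> = (ennreal (3 * (1/\<mu>)) + ennreal (K * 2)) * D"
  proof -
    have a: "ennreal (3 * (1/\<mu>)) = 3 * ennreal (1/\<mu>)"
      using \<mu>pos ennreal_mult[of 3 "1/\<mu>"] by simp
    have b: "ennreal (K * 2) = ennreal K * 2"
      using K0 by (simp add: ennreal_mult)
    show ?thesis unfolding a b by (simp add: distrib_right mult.assoc mult.left_commute)
  qed
  also have "\<dots> = ennreal c * D"
    unfolding c_eq using \<mu>pos K0 by (simp add: ennreal_plus)
  finally have SV_le: "SV \<le> ennreal c * D" .
  have "ennreal (inverse c) * SV \<le> ennreal (inverse c) * (ennreal c * D)"
    using SV_le by (rule mult_left_mono) simp
  also have "\<dots> = D" using cpos
    by (simp add: mult.assoc[symmetric] ennreal_mult[symmetric])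
  finally show ?thesis unfolding D_def SV_def sq_norm_on_def c_def .
qed
end
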